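(* Let $g\in\mathcal{P}(\mathbb{R})$ be symmetric around $0$, let $\beta,\sigma>0$ and $\gamma:=\beta+\sigma^2/2$. Then for every $\lambda\in(0,\sigma^2/2)$, $$\|L\|^\infty_\lambda\le\frac{1}{(\gamma+\lambda)(\sigma^2-2\lambda)}.$$ In particular, if $\kappa<\gamma\sigma^2$, then there exists $\lambda>0$ small enough such that $I-\kappa L$ is invertible as a bounded linear operator from $L^\infty_\lambda$ to $L^\infty_\lambda$.
   Context: For $\lambda>0$, $L^\infty_\lambda$ is the space of measurable $k:\mathbb{R}_+\to\mathbb{R}$ with $\|k\|^\infty_\lambda:=\operatorname{esssup}_{t\ge0}|k(t)|e^{\lambda t}<\infty$, and $\|L\|^\infty_\lambda:=\sup\{\|Lk\|^\infty_\lambda:\|k\|^\infty_\lambda=1\}$. The operator $L$ is $(Lk)(t)=\frac12\int_0^t\int_\theta^\infty e^{-\frac{\sigma^2}{2}(t-\theta)}e^{-\gamma(u-\theta)}\int_{\mathbb{R}}g(\mathrm{d}\omega)\,k(u)\cos(\omega(t-u))\,\mathrm{d}u\,\mathrm{d}\theta$, $t\ge0$. *)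

theory Defs
  imports "HOL-Probability.Probability"
begin

definition halfline :: "real measure" where
  "halfline = restrict_space lborel {0..}"

text \<open>Weighted sup-norm: esssup over t >= 0 of |k t| * exp(lambda t) (extended real;
  it is infinite for non-measurable k, by the library convention for esssup).\<close>
definition wnorm :: "real \<Rightarrow> (real \<Rightarrow> real) \<Rightarrow> ereal" where
  "wnorm lam k = esssup halfline (\<lambda>t. ereal (\<bar>k t\<bar> * exp (lam * t)))"

definition Linf :: "real \<Rightarrow> (real \<Rightarrow> real) set" where
  "Linf lam = {k. k \<in> borel_measurable halfline \<and> wnorm lam k < \<infinity>}"

definition Lop :: "real measure \<Rightarrow> real \<Rightarrow> real \<Rightarrow> (real \<Rightarrow> real) \<Rightarrow> real \<Rightarrow> real" where
  "Lop g sig gam k t =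
     (1/2) * (LINT \<theta>:{0..t}|lborel.
        (LINT u:{\<theta>..}|lborel.
           exp (- (sig\<^sup>2 / 2) * (t - \<theta>)) * exp (- gam * (u - \<theta>))
           * (LINT \<omega>|g. k u * cos (\<omega> * (t - u)))))"

definition Lnorm :: "real measure \<Rightarrow> real \<Rightarrow> real \<Rightarrow> real \<Rightarrow> ereal" where
  "Lnorm g sig gam lam =
     Sup {wnorm lam (Lop g sig gam k) | k. k \<in> Linf lam \<and> wnorm lam k = 1}"

definition ae_eq :: "(real \<Rightarrow> real) \<Rightarrow> (real \<Rightarrow> real) \<Rightarrow> bool" where
  "ae_eq f h \<longleftrightarrow> (AE t in halfline. f t = h t)"

text \<open>An operator T (acting on representatives, compatible with a.e. equality) is invertible
  as a bounded linear operator on L^infty_lambda: it maps L^infty_lambda into itself boundedly,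
  and there is a bounded operator M on L^infty_lambda, well defined on a.e.-classes,
  which is a two-sided inverse modulo a.e. equality.\<close>
definition bounded_invertible_on :: "real \<Rightarrow> ((real \<Rightarrow> real) \<Rightarrow> (real \<Rightarrow> real)) \<Rightarrow> bool" where
  "bounded_invertible_on lam T \<longleftrightarrow>
     (\<exists>C::real. \<forall>k\<in>Linf lam. T k \<in> Linf lam \<and> wnorm lam (T k) \<le> ereal C * wnorm lam k) \<and>
     (\<exists>M C. (\<forall>h\<in>Linf lam. M h \<in> Linf lam \<and> wnorm lam (M h) \<le> ereal C * wnorm lam h) \<and>
            (\<forall>h1\<in>Linf lam. \<forall>h2\<in>Linf lam. ae_eq h1 h2 \<longrightarrow> ae_eq (M h1) (M h2)) \<and>
            (\<forall>h\<in>Linf lam. ae_eq (T (M h)) h) \<and>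
            (\<forall>k\<in>Linf lam. ae_eq (M (T k)) k))"

end

theory Submission
  imports Defs
begin

definition phi :: "real measure \<Rightarrow> real \<Rightarrow> real" where
  "phi g s = (LINT \<omega>|g. cos (\<omega> * s))"

lemma Lop_alt: "Lop g sig gam k t = (1/2) * (LINT \<theta>:{0..t}|lborel.
        (LINT u:{\<theta>..}|lborel. exp (- (sig\<^sup>2 / 2) * (t - \<theta>)) * exp (- gam * (u - \<theta>)) * (k u * phi g (t - u))))"
  unfolding Lop_def phi_def by simp

lemma phi_meas:
  assumes "prob_space g" "sets g = sets borel"
  shows "phi g \<in> borel_measurable borel"
proof -
  interpret prob_space g by fact
  have "(\<lambda>(s,\<omega>). cos (\<omega> * s)) \<in> borel_measurable (borel \<Otimes>\<^sub>M (borel::real measure))"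
    by measurable
  then have "(\<lambda>(s,\<omega>). cos (\<omega> * s)) \<in> borel_measurable (borel \<Otimes>\<^sub>M g)"
    by (subst measurable_cong_sets[OF sets_pair_measure_cong[OF refl assms(2)] refl])
  then show ?thesis unfolding phi_def
    by (rule borel_measurable_lebesgue_integral)
qed

lemma Lop_meas_borel:
  assumes "prob_space g" "sets g = sets borel" and km[measurable]: "k \<in> borel_measurable borel"
  shows "Lop g sig gam k \<in> borel_measurable borel"
proof -
  note phi_meas[OF assms(1,2), measurable]
  define F where "F = (\<lambda>(x::real\<times>real) (u::real). indicator {snd x..} u *\<^sub>R (exp (- (sig\<^sup>2 / 2) * (fst x - snd x)) * exp (- gam * (u - snd x)) * (k u * phi g (fst x - u))))"
  have "case_prod F = (\<lambda>x. if snd (fst x) \<le> snd x then exp (- (sig\<^sup>2 / 2) * (fst (fst x) - snd (fst x))) * exp (- gam * (snd x - snd (fst x))) * (k (snd x) * phi g (fst (fst x) - snd x)) else 0)"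
    by (auto simp: fun_eq_iff indicator_def F_def)
  also have "\<dots> \<in> borel_measurable ((borel \<Otimes>\<^sub>M borel) \<Otimes>\<^sub>M lborel)"
    by measurable
  finally have "(\<lambda>x. integral\<^sup>L lborel (F x)) \<in> borel_measurable (borel \<Otimes>\<^sub>M borel)"
    by (rule lborel.borel_measurable_lebesgue_integral)
  then have I[measurable]: "(\<lambda>(t,\<theta>). LINT u:{\<theta>..}|lborel. exp (- (sig\<^sup>2 / 2) * (t - \<theta>)) * exp (- gam * (u - \<theta>)) * (k u * phi g (t - u))) \<in> borel_measurable (borel \<Otimes>\<^sub>M borel)"
    by (simp add: set_lebesgue_integral_def case_prod_beta F_def)
  have "(\<lambda>(t::real,\<theta>::real). indicator {0..t} \<theta> *\<^sub>R (LINT u:{\<theta>..}|lborel. exp (- (sig\<^sup>2 / 2) * (t - \<theta>)) * exp (- gam * (u - \<theta>)) * (k u * phi g (t - u))))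
    = (\<lambda>x. if 0 \<le> snd x \<and> snd x \<le> fst x then (\<lambda>(t,\<theta>). LINT u:{\<theta>..}|lborel. exp (- (sig\<^sup>2 / 2) * (t - \<theta>)) * exp (- gam * (u - \<theta>)) * (k u * phi g (t - u))) x else 0)"
    by (auto simp: fun_eq_iff indicator_def)
  also have "\<dots> \<in> borel_measurable (borel \<Otimes>\<^sub>M lborel)"
    by measurable
  finally have "(\<lambda>t. LINT \<theta>|lborel. curry (\<lambda>(t::real,\<theta>::real). indicator {0..t} \<theta> *\<^sub>R (LINT u:{\<theta>..}|lborel. exp (- (sig\<^sup>2 / 2) * (t - \<theta>)) * exp (- gam * (u - \<theta>)) * (k u * phi g (t - u)))) t \<theta>) \<in> borel_measurable borel"
    by (intro lborel.borel_measurable_lebesgue_integral) simp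
  then show ?thesis unfolding Lop_alt[abs_def] set_lebesgue_integral_def
    by simp
qed

lemma int_abs_bound:
  fixes f h :: "'a \<Rightarrow> real"
  assumes "AE x in M. \<bar>f x\<bar> \<le> h x" "integrable M h"
  shows "\<bar>integral\<^sup>L M f\<bar> \<le> integral\<^sup>L M h"
proof (cases "integrable M f")
  case True
  have "\<bar>integral\<^sup>L M f\<bar> \<le> integral\<^sup>L M (\<lambda>x. \<bar>f x\<bar>)"
    using integral_norm_bound[of M f] by simp
  also have "\<dots> \<le> integral\<^sup>L M h"
    by (rule integral_mono_AE) (use True assms in auto)
  finally show ?thesis .
next
  case False
  then have "integral\<^sup>L M f = 0" by (simp add: not_integrable_integral_eq)
  moreover have "0 \<le> integral\<^sup>L M h"
    by (rule integral_nonneg_AE) (use assms(1) in \<open>auto elim: eventually_mono\<close>)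
  ultimately show ?thesis by simp
qed

lemma phi_bound:
  assumes "prob_space g" "sets g = sets borel"
  shows "\<bar>phi g s\<bar> \<le> 1"
proof -
  interpret prob_space g by fact
  have m: "(\<lambda>\<omega>. cos (\<omega> * s)) \<in> borel_measurable g"
    by (subst measurable_cong_sets[OF assms(2) refl]) measurable
  have "\<bar>phi g s\<bar> \<le> integral\<^sup>L g (\<lambda>_. 1)"
    unfolding phi_def by (rule int_abs_bound) auto
  then show ?thesis by (simp add: prob_space)
qed

lemma Lop_local:
  assumes "\<And>u. 0 \<le> u \<Longrightarrow> k1 u = k2 u" "0 \<le> t"
  shows "Lop g sig gam k1 t = Lop g sig gam k2 t"
  unfolding Lop_alt
  by (intro arg_cong[where f="\<lambda>x. 1/2 * x"] set_lebesgue_integral_cong ballI allI impI) (auto simp: assms)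

lemma Lop_meas:
  assumes "prob_space g" "sets g = sets borel" and km: "k \<in> borel_measurable halfline"
  shows "Lop g sig gam k \<in> borel_measurable halfline"
proof -
  have "(\<lambda>x. indicator {0..} x *\<^sub>R k x) \<in> borel_measurable borel"
    using km unfolding halfline_def
    by (subst (asm) borel_measurable_restrict_space_iff) auto
  then have "Lop g sig gam (\<lambda>x. indicator {0..} x *\<^sub>R k x) \<in> borel_measurable borel"
    by (rule Lop_meas_borel[OF assms(1,2)])
  then have "Lop g sig gam (\<lambda>x. indicator {0..} x *\<^sub>R k x) \<in> borel_measurable halfline"
    unfolding halfline_def by (intro measurable_restrict_space1) simp
  then show ?thesis
    by (rule measurable_cong[THEN iffD1, rotated])
       (auto simp: halfline_def intro!: Lop_local)
qed

lemma exp_int: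
  fixes b c :: real assumes "b > 0"
  shows "set_integrable lborel {c..} (\<lambda>u. exp (- b * u))"
    and "(LINT u:{c..}|lborel. exp (- b * u)) = exp (- b * c) / b"
proof -
  have hi: "((\<lambda>x::real. exp (-b*x)) has_integral exp (-b*c)/b) {c..}"
    using has_integral_exp_minus_to_infinity[OF assms] .
  have ai: "(\<lambda>x::real. exp (-b*x)) absolutely_integrable_on {c..}"
    by (rule nonnegative_absolutely_integrable_1) (use hi in \<open>auto simp: integrable_on_def\<close>)
  then show si: "set_integrable lborel {c..} (\<lambda>u. exp (- b * u))"
    unfolding set_integrable_def
    by (subst integrable_completion[symmetric]) (auto simp: absolutely_integrable_on_def set_integrable_def)
  show "(LINT u:{c..}|lborel. exp (- b * u)) = exp (- b * c) / b"
    using set_borel_integral_eq_integral(2)[OF si] hi by (simp add: integral_unique)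
qed

lemma exp_int_fin:
  fixes b t :: real assumes "b > 0" "0 \<le> t"
  shows "(LINT u:{0..t}|lborel. exp (b * u)) = (exp (b * t) - 1) / b"
proof -
  have "(LBINT u=ereal 0..ereal t. exp (b * u)) = exp (b * t) / b - exp (b * 0) / b"
    by (rule interval_integral_FTC_finite)
       (use assms in \<open>auto intro!: continuous_intros derivative_eq_intros simp: has_real_derivative_iff_has_vector_derivative[symmetric]\<close>)
  then show ?thesis using assms by (simp add: interval_integral_Icc diff_divide_distrib)
qed

lemma inner_bound:
  assumes pg: "prob_space g" "sets g = sets borel" and gl: "gam + lam > 0"
    and kb: "AE u in lborel. 0 \<le> u \<longrightarrow> \<bar>k u\<bar> \<le> c * exp (- lam * u)"
    and th: "0 \<le> \<theta>" and c: "0 \<le> c"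
  shows "\<bar>LINT u:{\<theta>..}|lborel. exp (- a * (t - \<theta>)) * exp (- gam * (u - \<theta>)) * (k u * phi g (t - u))\<bar>
           \<le> c * exp (- a * (t - \<theta>)) * exp (- lam * \<theta>) / (gam + lam)"
proof -
  define C where "C = c * exp (- a * (t - \<theta>)) * exp (gam * \<theta>)"
  have C0: "0 \<le> C" using c by (simp add: C_def)
  have si: "set_integrable lborel {\<theta>..} (\<lambda>u. C * exp (- (gam + lam) * u))"
    using exp_int(1)[OF gl, of \<theta>] by (rule set_integrable_mult_right)
  have "\<bar>LINT u:{\<theta>..}|lborel. exp (- a * (t - \<theta>)) * exp (- gam * (u - \<theta>)) * (k u * phi g (t - u))\<bar>
        \<le> (LINT u:{\<theta>..}|lborel. C * exp (- (gam + lam) * u))"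
    unfolding set_lebesgue_integral_def
  proof (rule int_abs_bound)
    show "integrable lborel (\<lambda>u. indicator {\<theta>..} u *\<^sub>R (C * exp (- (gam + lam) * u)))"
      using si unfolding set_integrable_def .
    show "AE u in lborel. \<bar>indicator {\<theta>..} u *\<^sub>R (exp (- a * (t - \<theta>)) * exp (- gam * (u - \<theta>)) * (k u * phi g (t - u)))\<bar>
        \<le> indicator {\<theta>..} u *\<^sub>R (C * exp (- (gam + lam) * u))"
      using kb
    proof (rule eventually_mono)
      fix u assume h: "0 \<le> u \<longrightarrow> \<bar>k u\<bar> \<le> c * exp (- lam * u)"
      show "\<bar>indicator {\<theta>..} u *\<^sub>R (exp (- a * (t - \<theta>)) * exp (- gam * (u - \<theta>)) * (k u * phi g (t - u)))\<bar>
        \<le> indicator {\<theta>..} u *\<^sub>R (C * exp (- (gam + lam) * u))"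
      proof (cases "\<theta> \<le> u")
        case True
        then have ku: "\<bar>k u\<bar> \<le> c * exp (- lam * u)" using h th by auto
        have "\<bar>k u * phi g (t - u)\<bar> \<le> c * exp (- lam * u)"
          using ku phi_bound[OF pg, of "t - u"] by (simp add: abs_mult mult_le_one order_trans[OF mult_left_le] mult_le_cancel_left1)
        then have "\<bar>exp (- a * (t - \<theta>)) * exp (- gam * (u - \<theta>)) * (k u * phi g (t - u))\<bar>
            \<le> exp (- a * (t - \<theta>)) * exp (- gam * (u - \<theta>)) * (c * exp (- lam * u))"
          by (simp add: abs_mult mult_left_mono)
        also have "\<dots> = C * exp (- (gam + lam) * u)"
          unfolding C_def by (simp add: mult_exp_exp[symmetric] algebra_simps) (simp add: mult_exp_exp algebra_simps)
        finally show ?thesis using True by simp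
      qed simp
    qed
  qed
  also have "\<dots> = C * (exp (- (gam + lam) * \<theta>) / (gam + lam))"
    using exp_int(2)[OF gl, of \<theta>] by (simp add: set_integral_mult_right)
  also have "\<dots> = c * exp (- a * (t - \<theta>)) * exp (- lam * \<theta>) / (gam + lam)"
    unfolding C_def by (simp add: mult_exp_exp[symmetric] algebra_simps) (simp add: mult_exp_exp algebra_simps)
  finally show ?thesis .
qed

lemma inner_integrable:
  assumes pg: "prob_space g" "sets g = sets borel" and gl: "gam + lam > 0"
    and km: "k \<in> borel_measurable borel"
    and kb: "AE u in lborel. 0 \<le> u \<longrightarrow> \<bar>k u\<bar> \<le> c * exp (- lam * u)"
    and th: "0 \<le> \<theta>" and c: "0 \<le> c"
  shows "set_integrable lborel {\<theta>..} (\<lambda>u. exp (- a * (t - \<theta>)) * exp (- gam * (u - \<theta>)) * (k u * phi g (t - u)))"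
proof -
  note phi_meas[OF pg, measurable] km[measurable]
  define C where "C = c * exp (- a * (t - \<theta>)) * exp (gam * \<theta>)"
  have si: "set_integrable lborel {\<theta>..} (\<lambda>u. C * exp (- (gam + lam) * u))"
    using exp_int(1)[OF gl, of \<theta>] by (rule set_integrable_mult_right)
  show ?thesis
    unfolding set_integrable_def
  proof (rule Bochner_Integration.integrable_bound)
    show "integrable lborel (\<lambda>u. indicator {\<theta>..} u *\<^sub>R (C * exp (- (gam + lam) * u)))"
      using si unfolding set_integrable_def .
    show "(\<lambda>u. indicator {\<theta>..} u *\<^sub>R (exp (- a * (t - \<theta>)) * exp (- gam * (u - \<theta>)) * (k u * phi g (t - u)))) \<in> borel_measurable lborel"
      by measurable
    show "AE u in lborel. norm (indicator {\<theta>..} u *\<^sub>R (exp (- a * (t - \<theta>)) * exp (- gam * (u - \<theta>)) * (k u * phi g (t - u))))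
        \<le> norm (indicator {\<theta>..} u *\<^sub>R (C * exp (- (gam + lam) * u)))"
      using kb
    proof (rule eventually_mono)
      fix u assume h: "0 \<le> u \<longrightarrow> \<bar>k u\<bar> \<le> c * exp (- lam * u)"
      show "norm (indicator {\<theta>..} u *\<^sub>R (exp (- a * (t - \<theta>)) * exp (- gam * (u - \<theta>)) * (k u * phi g (t - u))))
        \<le> norm (indicator {\<theta>..} u *\<^sub>R (C * exp (- (gam + lam) * u)))"
      proof (cases "\<theta> \<le> u")
        case True
        then have ku: "\<bar>k u\<bar> \<le> c * exp (- lam * u)" using h th by auto
        have "\<bar>k u * phi g (t - u)\<bar> \<le> c * exp (- lam * u)"
          using ku phi_bound[OF pg, of "t - u"] by (simp add: abs_mult mult_le_one order_trans[OF mult_left_le] mult_le_cancel_left1)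
        then have "\<bar>exp (- a * (t - \<theta>)) * exp (- gam * (u - \<theta>)) * (k u * phi g (t - u))\<bar>
            \<le> exp (- a * (t - \<theta>)) * exp (- gam * (u - \<theta>)) * (c * exp (- lam * u))"
          by (simp add: abs_mult mult_left_mono)
        also have "\<dots> = C * exp (- (gam + lam) * u)"
          unfolding C_def by (simp add: mult_exp_exp[symmetric] algebra_simps) (simp add: mult_exp_exp algebra_simps)
        finally show ?thesis using True c by (simp add: C_def)
      qed simp
    qed
  qed
qed

definition Inn :: "real measure \<Rightarrow> real \<Rightarrow> real \<Rightarrow> (real \<Rightarrow> real) \<Rightarrow> real \<Rightarrow> real \<Rightarrow> real" where
  "Inn g sig gam k t \<theta> = (LINT u:{\<theta>..}|lborel. exp (- (sig\<^sup>2 / 2) * (t - \<theta>)) * exp (- gam * (u - \<theta>)) * (k u * phi g (t - u)))"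

lemma Lop_Inn: "Lop g sig gam k t = (1/2) * (LINT \<theta>:{0..t}|lborel. Inn g sig gam k t \<theta>)"
  unfolding Lop_alt Inn_def ..

lemma Inn_meas:
  assumes "prob_space g" "sets g = sets borel" and km[measurable]: "k \<in> borel_measurable borel"
  shows "(\<lambda>(t,\<theta>). Inn g sig gam k t \<theta>) \<in> borel_measurable (borel \<Otimes>\<^sub>M borel)"
proof -
  note phi_meas[OF assms(1,2), measurable]
  define F where "F = (\<lambda>(x::real\<times>real) (u::real). indicator {snd x..} u *\<^sub>R (exp (- (sig\<^sup>2 / 2) * (fst x - snd x)) * exp (- gam * (u - snd x)) * (k u * phi g (fst x - u))))"
  have "case_prod F = (\<lambda>x. if snd (fst x) \<le> snd x then exp (- (sig\<^sup>2 / 2) * (fst (fst x) - snd (fst x))) * exp (- gam * (snd x - snd (fst x))) * (k (snd x) * phi g (fst (fst x) - snd x)) else 0)"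
    by (auto simp: fun_eq_iff indicator_def F_def)
  also have "\<dots> \<in> borel_measurable ((borel \<Otimes>\<^sub>M borel) \<Otimes>\<^sub>M lborel)"
    by measurable
  finally have "(\<lambda>x. integral\<^sup>L lborel (F x)) \<in> borel_measurable (borel \<Otimes>\<^sub>M borel)"
    by (rule lborel.borel_measurable_lebesgue_integral)
  then show ?thesis
    by (simp add: set_lebesgue_integral_def case_prod_beta F_def Inn_def)
qed

lemma outer_integrable:
  assumes pg: "prob_space g" "sets g = sets borel" and gl: "gam + lam > 0"
    and km: "k \<in> borel_measurable borel"
    and kb: "AE u in lborel. 0 \<le> u \<longrightarrow> \<bar>k u\<bar> \<le> c * exp (- lam * u)"
    and c: "0 \<le> c" and l0: "0 \<le> lam"
  shows "set_integrable lborel {0..t} (Inn g sig gam k t)"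
proof -
  define a where "a = sig\<^sup>2 / 2"
  have m: "Inn g sig gam k t \<in> borel_measurable borel"
    using measurable_Pair2[OF Inn_meas[OF pg km], of t] by simp
  show ?thesis
    unfolding set_integrable_def
  proof (rule integrableI_bounded_set[where A="{0..t}" and B="c * exp (a * t) / (gam + lam)"])
    show "(\<lambda>\<theta>. indicator {0..t} \<theta> *\<^sub>R Inn g sig gam k t \<theta>) \<in> borel_measurable lborel"
      using m by measurable
    show "AE x in lborel. x \<in> {0..t} \<longrightarrow> norm (indicator {0..t} x *\<^sub>R Inn g sig gam k t x) \<le> c * exp (a * t) / (gam + lam)"
    proof (rule AE_I2, rule impI)
      fix \<theta> assume th: "\<theta> \<in> {0..t}"
      have "\<bar>Inn g sig gam k t \<theta>\<bar> \<le> c * exp (- a * (t - \<theta>)) * exp (- lam * \<theta>) / (gam + lam)"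
        unfolding Inn_def a_def by (rule inner_bound[OF pg gl kb _ c]) (use th in auto)
      also have "\<dots> \<le> c * exp (a * t) / (gam + lam)"
      proof -
        have "- a * (t - \<theta>) + (- lam * \<theta>) \<le> a * t"
        proof -
          have a0: "0 \<le> a" unfolding a_def by simp
          have "0 \<le> a * (t - \<theta>)" "0 \<le> lam * \<theta>" "0 \<le> a * t"
            using th l0 a0 by auto
          then show ?thesis by (simp add: algebra_simps)
        qed
        then have "exp (- a * (t - \<theta>)) * exp (- lam * \<theta>) \<le> exp (a * t)"
          by (simp add: mult_exp_exp)
        then show ?thesis using c gl
          by (intro divide_right_mono) (auto simp: mult.assoc intro: mult_left_mono)
      qed
      finally show "norm (indicator {0..t} \<theta> *\<^sub>R Inn g sig gam k t \<theta>) \<le> c * exp (a * t) / (gam + lam)"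
        using th by simp
    qed
  qed (auto simp: emeasure_lborel_Icc_eq)
qed

lemma Lop_bound:
  assumes pg: "prob_space g" "sets g = sets borel" and gl: "gam + lam > 0"
    and lam: "0 < lam" "lam < sig\<^sup>2 / 2"
    and kb: "AE u in lborel. 0 \<le> u \<longrightarrow> \<bar>k u\<bar> \<le> c * exp (- lam * u)"
    and t: "0 \<le> t" and c: "0 \<le> c"
  shows "\<bar>Lop g sig gam k t\<bar> \<le> c * exp (- lam * t) / ((gam + lam) * (sig\<^sup>2 - 2 * lam))"
proof -
  define a where "a = sig\<^sup>2 / 2"
  have al: "0 < a - lam" using lam by (simp add: a_def)
  define D where "D = c / (gam + lam) * exp (- a * t)"
  have D0: "0 \<le> D" using c gl by (simp add: D_def)
  have si: "set_integrable lborel {0..t} (\<lambda>\<theta>. D * exp ((a - lam) * \<theta>))"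
    by (intro borel_integrable_atLeastAtMost' continuous_intros)
  have "\<bar>LINT \<theta>:{0..t}|lborel. (LINT u:{\<theta>..}|lborel. exp (- a * (t - \<theta>)) * exp (- gam * (u - \<theta>)) * (k u * phi g (t - u)))\<bar>
     \<le> (LINT \<theta>:{0..t}|lborel. D * exp ((a - lam) * \<theta>))"
    unfolding set_lebesgue_integral_def[of _ "{0..t}"]
  proof (rule int_abs_bound)
    show "integrable lborel (\<lambda>\<theta>. indicator {0..t} \<theta> *\<^sub>R (D * exp ((a - lam) * \<theta>)))"
      using si unfolding set_integrable_def .
    show "AE \<theta> in lborel. \<bar>indicator {0..t} \<theta> *\<^sub>R (LINT u:{\<theta>..}|lborel. exp (- a * (t - \<theta>)) * exp (- gam * (u - \<theta>)) * (k u * phi g (t - u)))\<bar>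
        \<le> indicator {0..t} \<theta> *\<^sub>R (D * exp ((a - lam) * \<theta>))"
    proof (rule AE_I2)
      fix \<theta> :: real
      show "\<bar>indicator {0..t} \<theta> *\<^sub>R (LINT u:{\<theta>..}|lborel. exp (- a * (t - \<theta>)) * exp (- gam * (u - \<theta>)) * (k u * phi g (t - u)))\<bar>
        \<le> indicator {0..t} \<theta> *\<^sub>R (D * exp ((a - lam) * \<theta>))"
      proof (cases "\<theta> \<in> {0..t}")
        case True
        have "\<bar>LINT u:{\<theta>..}|lborel. exp (- a * (t - \<theta>)) * exp (- gam * (u - \<theta>)) * (k u * phi g (t - u))\<bar>
           \<le> c * exp (- a * (t - \<theta>)) * exp (- lam * \<theta>) / (gam + lam)"
          by (rule inner_bound[OF pg gl kb _ c]) (use True in auto)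
        also have "\<dots> = D * exp ((a - lam) * \<theta>)"
          unfolding D_def by (simp add: mult_exp_exp algebra_simps)
        finally show ?thesis using True by simp
      qed simp
    qed
  qed
  also have "\<dots> = D * ((exp ((a - lam) * t) - 1) / (a - lam))"
    using exp_int_fin[OF al t] by (simp add: set_integral_mult_right)
  also have "\<dots> \<le> D * (exp ((a - lam) * t) / (a - lam))"
    using D0 al by (intro mult_left_mono divide_right_mono) auto
  also have "\<dots> = c * exp (- lam * t) / ((gam + lam) * (a - lam))"
    unfolding D_def by (simp add: mult_exp_exp algebra_simps)
  finally have "\<bar>Lop g sig gam k t\<bar> \<le> 1/2 * (c * exp (- lam * t) / ((gam + lam) * (a - lam)))"
    unfolding Lop_alt a_def by (simp add: abs_mult)
  also have "\<dots> = c * exp (- lam * t) / ((gam + lam) * (sig\<^sup>2 - 2 * lam))"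
    unfolding a_def by (simp add: field_simps)
  finally show ?thesis .
qed

lemma Lop_smult: "Lop g sig gam (\<lambda>u. r * k u) t = r * Lop g sig gam k t"
proof -
  have "\<And>\<theta> u. exp (- (sig\<^sup>2 / 2) * (t - \<theta>)) * exp (- gam * (u - \<theta>)) * (r * k u * phi g (t - u))
      = r * (exp (- (sig\<^sup>2 / 2) * (t - \<theta>)) * exp (- gam * (u - \<theta>)) * (k u * phi g (t - u)))"
    by (simp add: algebra_simps)
  then show ?thesis unfolding Lop_alt by (simp add: algebra_simps)
qed

lemma Lop_add_borel:
  assumes pg: "prob_space g" "sets g = sets borel" and gl: "gam + lam > 0" and l0: "0 \<le> lam"
    and km1: "k1 \<in> borel_measurable borel"
    and kb1: "AE u in lborel. 0 \<le> u \<longrightarrow> \<bar>k1 u\<bar> \<le> c1 * exp (- lam * u)"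
    and km2: "k2 \<in> borel_measurable borel"
    and kb2: "AE u in lborel. 0 \<le> u \<longrightarrow> \<bar>k2 u\<bar> \<le> c2 * exp (- lam * u)"
    and c: "0 \<le> c1" "0 \<le> c2"
  shows "Lop g sig gam (\<lambda>u. k1 u + k2 u) t = Lop g sig gam k1 t + Lop g sig gam k2 t"
proof -
  have inn: "Inn g sig gam (\<lambda>u. k1 u + k2 u) t \<theta> = Inn g sig gam k1 t \<theta> + Inn g sig gam k2 t \<theta>"
    if th: "0 \<le> \<theta>" for \<theta>
  proof -
    have e: "\<And>u. exp (- (sig\<^sup>2 / 2) * (t - \<theta>)) * exp (- gam * (u - \<theta>)) * ((k1 u + k2 u) * phi g (t - u))
      = exp (- (sig\<^sup>2 / 2) * (t - \<theta>)) * exp (- gam * (u - \<theta>)) * (k1 u * phi g (t - u))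
        + exp (- (sig\<^sup>2 / 2) * (t - \<theta>)) * exp (- gam * (u - \<theta>)) * (k2 u * phi g (t - u))"
      by (simp add: algebra_simps)
    show ?thesis unfolding Inn_def e
      by (rule set_integral_add(2)[OF inner_integrable[OF pg gl km1 kb1 th c(1)] inner_integrable[OF pg gl km2 kb2 th c(2)]])
  qed
  have "(LINT \<theta>:{0..t}|lborel. Inn g sig gam (\<lambda>u. k1 u + k2 u) t \<theta>)
      = (LINT \<theta>:{0..t}|lborel. Inn g sig gam k1 t \<theta> + Inn g sig gam k2 t \<theta>)"
    by (rule set_lebesgue_integral_cong) (auto simp: inn)
  also have "\<dots> = (LINT \<theta>:{0..t}|lborel. Inn g sig gam k1 t \<theta>) + (LINT \<theta>:{0..t}|lborel. Inn g sig gam k2 t \<theta>)"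
    by (rule set_integral_add(2)[OF outer_integrable[OF pg gl km1 kb1 c(1) l0] outer_integrable[OF pg gl km2 kb2 c(2) l0]])
  finally show ?thesis unfolding Lop_Inn by (simp add: algebra_simps)
qed

definition E0 :: "(real \<Rightarrow> real) \<Rightarrow> real \<Rightarrow> real" where
  "E0 k x = indicator {0..} x * k x"

lemma E0_meas: "k \<in> borel_measurable halfline \<Longrightarrow> E0 k \<in> borel_measurable borel"
  unfolding halfline_def E0_def[abs_def]
  by (subst (asm) borel_measurable_restrict_space_iff) auto

lemma space_halfline: "space halfline = {0..}"
  by (simp add: halfline_def space_restrict_space)

lemma AE_halfline: "(AE x in halfline. P x) \<longleftrightarrow> (AE x in lborel. 0 \<le> x \<longrightarrow> P x)"
  unfolding halfline_def by (subst AE_restrict_space_iff) auto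

lemma E0_bound:
  assumes "AE u in halfline. \<bar>k u\<bar> * exp (lam * u) \<le> c"
  shows "AE u in lborel. 0 \<le> u \<longrightarrow> \<bar>E0 k u\<bar> \<le> c * exp (- lam * u)"
  using assms unfolding AE_halfline
proof (rule eventually_mono)
  fix u assume h: "0 \<le> u \<longrightarrow> \<bar>k u\<bar> * exp (lam * u) \<le> c"
  show "0 \<le> u \<longrightarrow> \<bar>E0 k u\<bar> \<le> c * exp (- lam * u)"
  proof
    assume u: "0 \<le> u"
    have "\<bar>k u\<bar> * exp (lam * u) * exp (- lam * u) \<le> c * exp (- lam * u)"
      using h u by (intro mult_right_mono) auto
    then show "\<bar>E0 k u\<bar> \<le> c * exp (- lam * u)"
      using u by (simp add: E0_def mult.assoc mult_exp_exp)
  qed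
qed

lemma Lop_E0: "0 \<le> t \<Longrightarrow> Lop g sig gam (E0 k) t = Lop g sig gam k t"
  by (rule Lop_local) (simp add: E0_def)

lemma halfline_nonnull: "emeasure halfline (space halfline) \<noteq> 0"
proof -
  have "emeasure halfline (space halfline) = emeasure lborel {0::real..}"
    unfolding halfline_def by (simp add: emeasure_restrict_space space_restrict_space)
  also have "\<dots> \<ge> emeasure lborel {0::real..1}"
    by (intro emeasure_mono) auto
  finally show ?thesis by (auto simp: emeasure_lborel_Icc_eq)
qed

lemma AE_False_halfline: "\<not> (AE x in halfline. False)"
  using halfline_nonnull ae_filter_eq_bot_iff[of halfline] trivial_limit_def[of "ae_filter halfline"] by auto

lemma AE_halfline_ex: "AE x in halfline. P x \<Longrightarrow> \<exists>x. P x"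
proof (rule ccontr)
  assume "AE x in halfline. P x" "\<not> (\<exists>x. P x)"
  then have "AE x in halfline. False" by (auto elim: eventually_mono)
  then show False using AE_False_halfline by auto
qed

locale setting =
  fixes g :: "real measure" and sig gam lam :: real
  assumes pg: "prob_space g" and sg: "sets g = sets borel" and sig: "0 < sig" and gam: "0 < gam"
    and lam0: "0 < lam" and lam1: "lam < sig\<^sup>2 / 2"
begin

abbreviation L where "L \<equiv> Lop g sig gam"

definition K where "K = 1 / ((gam + lam) * (sig\<^sup>2 - 2 * lam))"

lemma K_pos: "0 < K"
  using gam lam0 lam1 unfolding K_def by simp

definition B where "B k c \<longleftrightarrow> k \<in> borel_measurable halfline \<and> (AE u in halfline. \<bar>k u\<bar> * exp (lam * u) \<le> c)"

lemma B_nonneg: "B k c \<Longrightarrow> 0 \<le> c"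
  unfolding B_def using AE_halfline_ex[of "\<lambda>u. \<bar>k u\<bar> * exp (lam * u) \<le> c"]
  by (auto intro: order_trans[rotated])

lemma L_bound_pt:
  assumes "B k c" "0 \<le> t"
  shows "\<bar>L k t\<bar> * exp (lam * t) \<le> K * c"
proof -
  have c: "0 \<le> c" using B_nonneg[OF assms(1)] .
  have kb: "AE u in lborel. 0 \<le> u \<longrightarrow> \<bar>E0 k u\<bar> \<le> c * exp (- lam * u)"
    by (rule E0_bound) (use assms(1) in \<open>simp add: B_def\<close>)
  have "\<bar>L (E0 k) t\<bar> \<le> c * exp (- lam * t) / ((gam + lam) * (sig\<^sup>2 - 2 * lam))"
    by (rule Lop_bound[OF pg sg _ lam0 lam1 kb assms(2) c])
       (use gam lam0 in auto)
  then have "\<bar>L k t\<bar> \<le> c * exp (- lam * t) / ((gam + lam) * (sig\<^sup>2 - 2 * lam))"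
    using Lop_E0[OF assms(2)] by simp
  then have "\<bar>L k t\<bar> * exp (lam * t) \<le> c * exp (- lam * t) / ((gam + lam) * (sig\<^sup>2 - 2 * lam)) * exp (lam * t)"
    by (intro mult_right_mono) auto
  also have "\<dots> = K * c"
    unfolding K_def by (simp add: field_simps mult_exp_exp)
  finally show ?thesis .
qed

lemma L_B: assumes "B k c" shows "B (L k) (K * c)"
  unfolding B_def
proof
  show "L k \<in> borel_measurable halfline"
    using Lop_meas[OF pg sg] assms by (auto simp: B_def)
  show "AE u in halfline. \<bar>L k u\<bar> * exp (lam * u) \<le> K * c"
    by (rule AE_I2) (use L_bound_pt[OF assms] in \<open>auto simp: space_halfline\<close>)
qed

lemma B_add: assumes "B k1 c1" "B k2 c2" shows "B (\<lambda>u. k1 u + k2 u) (c1 + c2)"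
  unfolding B_def
proof
  show "(\<lambda>u. k1 u + k2 u) \<in> borel_measurable halfline" using assms by (auto simp: B_def)
  have "AE u in halfline. \<bar>k1 u\<bar> * exp (lam * u) \<le> c1" "AE u in halfline. \<bar>k2 u\<bar> * exp (lam * u) \<le> c2"
    using assms by (auto simp: B_def)
  then show "AE u in halfline. \<bar>k1 u + k2 u\<bar> * exp (lam * u) \<le> c1 + c2"
  proof eventually_elim
    case (elim u)
    have "\<bar>k1 u + k2 u\<bar> * exp (lam * u) \<le> (\<bar>k1 u\<bar> + \<bar>k2 u\<bar>) * exp (lam * u)"
      by (intro mult_right_mono) auto
    then show ?case using elim by (simp add: distrib_right)
  qed
qed

lemma B_smult: assumes "B k c" shows "B (\<lambda>u. r * k u) (\<bar>r\<bar> * c)"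
  unfolding B_def
proof
  show "(\<lambda>u. r * k u) \<in> borel_measurable halfline" using assms by (auto simp: B_def)
  have "AE u in halfline. \<bar>k u\<bar> * exp (lam * u) \<le> c"
    using assms by (auto simp: B_def)
  then show "AE u in halfline. \<bar>r * k u\<bar> * exp (lam * u) \<le> \<bar>r\<bar> * c"
  proof eventually_elim
    case (elim u)
    then show ?case by (simp add: abs_mult mult.assoc mult_left_mono)
  qed
qed

lemma B_mono: "B k c \<Longrightarrow> c \<le> c' \<Longrightarrow> B k c'"
  unfolding B_def by (auto elim: eventually_mono)

lemma L_add:
  assumes "B k1 c1" "B k2 c2" "0 \<le> t"
  shows "L (\<lambda>u. k1 u + k2 u) t = L k1 t + L k2 t"
proof -
  have e: "E0 (\<lambda>u. k1 u + k2 u) = (\<lambda>u. E0 k1 u + E0 k2 u)"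
    by (auto simp: E0_def fun_eq_iff algebra_simps)
  have "L (\<lambda>u. k1 u + k2 u) t = L (E0 (\<lambda>u. k1 u + k2 u)) t"
    using Lop_E0[OF assms(3)] by simp
  also have "\<dots> = L (E0 k1) t + L (E0 k2) t"
  proof -
    have kb1: "AE u in lborel. 0 \<le> u \<longrightarrow> \<bar>E0 k1 u\<bar> \<le> c1 * exp (- lam * u)"
      by (rule E0_bound) (use assms(1) in \<open>simp add: B_def\<close>)
    have kb2: "AE u in lborel. 0 \<le> u \<longrightarrow> \<bar>E0 k2 u\<bar> \<le> c2 * exp (- lam * u)"
      by (rule E0_bound) (use assms(2) in \<open>simp add: B_def\<close>)
    have m1: "E0 k1 \<in> borel_measurable borel" by (rule E0_meas) (use assms(1) in \<open>simp add: B_def\<close>)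
    have m2: "E0 k2 \<in> borel_measurable borel" by (rule E0_meas) (use assms(2) in \<open>simp add: B_def\<close>)
    show ?thesis unfolding e
      by (rule Lop_add_borel[OF pg sg _ _ m1 kb1 m2 kb2 B_nonneg[OF assms(1)] B_nonneg[OF assms(2)]])
         (use gam lam0 in auto)
  qed
  also have "\<dots> = L k1 t + L k2 t"
    using Lop_E0[OF assms(3)] by simp
  finally show ?thesis .
qed

lemma id_halfline[measurable]: "(\<lambda>x. x) \<in> borel_measurable halfline"
  unfolding halfline_def by (intro measurable_restrict_space1) simp

lemma B_wnorm: assumes "B k c" shows "wnorm lam k \<le> ereal c"
  unfolding wnorm_def
proof (rule esssup_I)
  have [measurable]: "k \<in> borel_measurable halfline" using assms by (simp add: B_def)
  show "(\<lambda>t. ereal (\<bar>k t\<bar> * exp (lam * t))) \<in> borel_measurable halfline"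
    by measurable
  show "AE x in halfline. ereal (\<bar>k x\<bar> * exp (lam * x)) \<le> ereal c"
    using assms unfolding B_def by auto
qed

lemma B_Linf: "B k c \<Longrightarrow> k \<in> Linf lam"
  unfolding Linf_def using B_wnorm[of k c] by (auto simp: B_def intro: le_less_trans)

lemma Linf_B:
  assumes "k \<in> Linf lam"
  shows "B k (real_of_ereal (wnorm lam k)) \<and> wnorm lam k = ereal (real_of_ereal (wnorm lam k))"
proof -
  have ae: "AE t in halfline. ereal (\<bar>k t\<bar> * exp (lam * t)) \<le> wnorm lam k"
    unfolding wnorm_def by (rule esssup_AE)
  have "0 \<le> wnorm lam k"
  proof (rule ccontr)
    assume "\<not> 0 \<le> wnorm lam k"
    then have "AE t in halfline. False"
      using ae by (elim eventually_mono) (smt (verit) abs_ge_zero exp_gt_zero ereal_less_eq(5) mult_nonneg_nonneg not_le order_trans)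
    then show False using AE_False_halfline by auto
  qed
  moreover have "wnorm lam k < \<infinity>" using assms by (simp add: Linf_def)
  ultimately obtain c where c: "wnorm lam k = ereal c" by (cases "wnorm lam k") auto
  have "B k c" using assms ae unfolding B_def Linf_def c by auto
  then show ?thesis using c by simp
qed

lemma Lnorm_bound: "Lnorm g sig gam lam \<le> ereal K"
  unfolding Lnorm_def
proof (rule Sup_least, clarify)
  fix k assume k: "k \<in> Linf lam" "wnorm lam k = 1"
  then have "B k 1" using Linf_B[OF k(1)] by (simp add: one_ereal_def)
  then have "B (L k) (K * 1)" by (rule L_B)
  then show "wnorm lam (L k) \<le> ereal K" using B_wnorm by simp
qed

lemma L_zero: "L (\<lambda>u. 0) t = 0"
  using Lop_smult[of g sig gam 0 "\<lambda>u. 0" t] by simp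

lemma L_ae_cong:
  assumes "B h1 c1" "B h2 c2" "AE u in halfline. h1 u = h2 u" "0 \<le> t"
  shows "L h1 t = L h2 t"
proof -
  have b2: "B (\<lambda>u. (-1) * h2 u) (\<bar>-1\<bar> * c2)" by (rule B_smult[OF assms(2)])
  have d: "B (\<lambda>u. h1 u + (-1) * h2 u) 0"
    unfolding B_def
  proof
    show "(\<lambda>u. h1 u + (-1) * h2 u) \<in> borel_measurable halfline"
      using B_add[OF assms(1) b2] by (simp add: B_def)
    show "AE u in halfline. \<bar>h1 u + (-1) * h2 u\<bar> * exp (lam * u) \<le> 0"
      using assms(3) by (auto elim: eventually_mono)
  qed
  have "\<bar>L (\<lambda>u. h1 u + (-1) * h2 u) t\<bar> * exp (lam * t) \<le> K * 0"
    by (rule L_bound_pt[OF d assms(4)])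
  then have "L (\<lambda>u. h1 u + (-1) * h2 u) t = 0"
    by (simp add: mult_le_0_iff)
  moreover have "L (\<lambda>u. h1 u + (-1) * h2 u) t = L h1 t + L (\<lambda>u. (-1) * h2 u) t"
    by (rule L_add[OF assms(1) b2 assms(4)])
  ultimately show ?thesis using Lop_smult[of g sig gam "-1" h2 t] by simp
qed

end

lemma geo_bound:
  fixes f :: "nat \<Rightarrow> real"
  assumes q: "0 \<le> q" "q < 1" and fb: "\<And>n. \<bar>f n\<bar> \<le> q ^ n * b"
  shows "summable f" "\<bar>suminf f\<bar> \<le> b / (1 - q)"
proof -
  have sg: "(\<lambda>n. q ^ n * b) sums (1 / (1 - q) * b)"
    by (rule sums_mult2[OF geometric_sums]) (use q in auto)
  have sa: "summable (\<lambda>n. \<bar>f n\<bar>)"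
    by (rule summable_comparison_test[OF _ sums_summable[OF sg]]) (use fb in auto)
  then show "summable f" by (rule summable_rabs_cancel)
  have "\<bar>suminf f\<bar> \<le> (\<Sum>n. \<bar>f n\<bar>)" by (rule summable_rabs[OF sa])
  also have "\<dots> \<le> (\<Sum>n. q ^ n * b)"
    by (rule suminf_le[OF fb sa sums_summable[OF sg]])
  also have "\<dots> = b / (1 - q)" using sums_unique[OF sg] by simp
  finally show "\<bar>suminf f\<bar> \<le> b / (1 - q)" .
qed

locale neumann = setting +
  fixes kap :: real
  assumes kap0: "0 \<le> kap" and q1: "kap * K < 1"
begin

definition q where "q = kap * K"
lemma q0: "0 \<le> q" using kap0 K_pos by (simp add: q_def)
lemma q1': "q < 1" using q1 by (simp add: q_def)

definition T where "T k = (\<lambda>t. k t - kap * L k t)"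
definition M where "M h = (\<lambda>t. \<Sum>n. kap ^ n * (L ^^ n) h t)"

lemma P_B: "B h c \<Longrightarrow> B ((L ^^ n) h) (K ^ n * c)"
proof (induction n)
  case 0 then show ?case by simp
next
  case (Suc n)
  then have "B (L ((L ^^ n) h)) (K * (K ^ n * c))" by (intro L_B) 
  then show ?case by (simp add: mult.assoc)
qed

lemma P_pt: "B h c \<Longrightarrow> 0 \<le> t \<Longrightarrow> \<bar>(L ^^ Suc n) h t\<bar> * exp (lam * t) \<le> K ^ Suc n * c"
  using L_bound_pt[OF P_B[of h c n]] by (simp add: mult.assoc)

lemma term_bound:
  assumes "\<bar>(L ^^ n) h t\<bar> * exp (lam * t) \<le> K ^ n * c"
  shows "\<bar>kap ^ n * (L ^^ n) h t\<bar> \<le> q ^ n * (c * exp (- lam * t))"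
proof -
  have "\<bar>(L ^^ n) h t\<bar> = \<bar>(L ^^ n) h t\<bar> * exp (lam * t) * exp (- lam * t)"
    by (simp add: mult.assoc mult_exp_exp)
  also have "\<dots> \<le> K ^ n * c * exp (- lam * t)"
    using assms by (intro mult_right_mono) auto
  finally have "kap ^ n * \<bar>(L ^^ n) h t\<bar> \<le> kap ^ n * (K ^ n * c * exp (- lam * t))"
    using kap0 by (intro mult_left_mono) auto
  then show ?thesis using kap0 by (simp add: abs_mult q_def power_mult_distrib mult.assoc)
qed

lemma AE_nonneg: "AE t in halfline. 0 \<le> t"
  by (rule AE_I2) (simp add: space_halfline)

lemma P_ae: assumes "B h c" shows "AE t in halfline. 0 \<le> t \<and> (\<forall>n. \<bar>(L ^^ n) h t\<bar> * exp (lam * t) \<le> K ^ n * c)"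
proof -
  have "AE t in halfline. \<bar>h t\<bar> * exp (lam * t) \<le> c" using assms by (simp add: B_def)
  with AE_nonneg show ?thesis
  proof eventually_elim
    case (elim t)
    show ?case
    proof (intro conjI allI)
      fix n show "\<bar>(L ^^ n) h t\<bar> * exp (lam * t) \<le> K ^ n * c"
        using elim P_pt[OF assms, of t] by (cases n) auto
    qed (use elim in auto)
  qed
qed

lemma M_summable:
  assumes "B h c" "0 \<le> t"
  shows "summable (\<lambda>n. kap ^ n * (L ^^ n) h t)"
proof (rule summable_comparison_test')
  show "summable (\<lambda>n. q ^ n * (c * exp (- lam * t)))"
    by (rule summable_mult2) (use q0 q1' in \<open>auto intro: summable_geometric\<close>)
  fix n :: nat assume "1 \<le> n"
  then obtain m where n: "n = Suc m" by (cases n) auto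
  show "norm (kap ^ n * (L ^^ n) h t) \<le> q ^ n * (c * exp (- lam * t))"
    unfolding n real_norm_def by (rule term_bound[OF P_pt[OF assms]])
qed

lemma M_meas: assumes "B h c" shows "M h \<in> borel_measurable halfline"
  unfolding M_def
proof (rule borel_measurable_LIMSEQ_real)
  fix t assume "t \<in> space halfline"
  then have "0 \<le> t" by (simp add: space_halfline)
  then show "(\<lambda>i. \<Sum>n<i. kap ^ n * (L ^^ n) h t) \<longlonglongrightarrow> (\<Sum>n. kap ^ n * (L ^^ n) h t)"
    by (rule summable_LIMSEQ[OF M_summable[OF assms]])
next
  fix i
  have "\<And>n. (L ^^ n) h \<in> borel_measurable halfline" using P_B[OF assms] by (simp add: B_def)
  then show "(\<lambda>t. \<Sum>n<i. kap ^ n * (L ^^ n) h t) \<in> borel_measurable halfline"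
    by (intro borel_measurable_sum borel_measurable_times borel_measurable_const) auto
qed

lemma M_B: assumes "B h c" shows "B (M h) (c / (1 - q))"
  unfolding B_def
proof
  show "M h \<in> borel_measurable halfline" by (rule M_meas[OF assms])
  show "AE u in halfline. \<bar>M h u\<bar> * exp (lam * u) \<le> c / (1 - q)"
    using P_ae[OF assms]
  proof eventually_elim
    case (elim t)
    have "\<bar>M h t\<bar> \<le> c * exp (- lam * t) / (1 - q)"
      unfolding M_def by (rule geo_bound(2)[OF q0 q1' term_bound]) (use elim in auto)
    then have "\<bar>M h t\<bar> * exp (lam * t) \<le> c * exp (- lam * t) / (1 - q) * exp (lam * t)"
      by (intro mult_right_mono) auto
    also have "\<dots> = c / (1 - q)" by (simp add: field_simps mult_exp_exp)
    finally show ?case .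
  qed
qed

lemma P_ae_cong:
  assumes "B h1 c1" "B h2 c2" "AE u in halfline. h1 u = h2 u"
  shows "0 \<le> t \<Longrightarrow> (L ^^ Suc n) h1 t = (L ^^ Suc n) h2 t"
proof (induction n arbitrary: t)
  case 0 then show ?case using L_ae_cong[OF assms] by simp
next
  case (Suc n)
  have "L ((L ^^ Suc n) h1) t = L ((L ^^ Suc n) h2) t"
    by (rule Lop_local) (use Suc in auto)
  then show ?case by simp
qed

lemma M_ae_cong:
  assumes "B h1 c1" "B h2 c2" "AE u in halfline. h1 u = h2 u"
  shows "AE t in halfline. M h1 t = M h2 t"
  using assms(3) AE_nonneg
proof eventually_elim
  case (elim t)
  have "(\<lambda>n. kap ^ n * (L ^^ n) h1 t) = (\<lambda>n. kap ^ n * (L ^^ n) h2 t)"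
  proof
    fix n show "kap ^ n * (L ^^ n) h1 t = kap ^ n * (L ^^ n) h2 t"
    proof (cases n)
      case (Suc m) then show ?thesis using P_ae_cong[OF assms, of t m] elim by simp
    qed (use elim in simp)
  qed
  then show ?case unfolding M_def by (rule arg_cong)
qed

lemma term_bound2:
  assumes "B h c" "0 \<le> t"
  shows "\<bar>kap ^ n * (L ^^ Suc n) h t\<bar> \<le> q ^ n * (K * c * exp (- lam * t))"
proof -
  have "\<bar>(L ^^ Suc n) h t\<bar> = \<bar>(L ^^ Suc n) h t\<bar> * exp (lam * t) * exp (- lam * t)"
    by (simp add: mult.assoc mult_exp_exp)
  also have "\<dots> \<le> K ^ Suc n * c * exp (- lam * t)"
    using P_pt[OF assms] by (intro mult_right_mono) auto
  finally have "kap ^ n * \<bar>(L ^^ Suc n) h t\<bar> \<le> kap ^ n * (K ^ Suc n * c * exp (- lam * t))"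
    using kap0 by (intro mult_left_mono) auto
  then show ?thesis using kap0 by (simp add: abs_mult q_def power_mult_distrib mult_ac)
qed

lemma B_zero: "B (\<lambda>u. 0) 0"
  unfolding B_def by auto

lemma TM:
  assumes hB: "B h c" and t: "0 \<le> t"
  shows "T (M h) t = h t"
proof -
  define a where "a n = kap ^ n * (L ^^ n) h t" for n
  define S where "S N = (\<lambda>u. \<Sum>n<N. kap ^ n * (L ^^ n) h u)" for N
  have c0: "0 \<le> c" by (rule B_nonneg[OF hB])
  have SB: "\<exists>c'. B (S N) c'" for N
  proof (induction N)
    case 0 then show ?case using B_zero by (auto simp: S_def)
  next
    case (Suc N)
    then obtain c' where "B (S N) c'" by blast
    then have "B (\<lambda>u. S N u + kap ^ N * (L ^^ N) h u) (c' + \<bar>kap ^ N\<bar> * (K ^ N * c))"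
      by (intro B_add B_smult P_B hB)
    moreover have "S (Suc N) = (\<lambda>u. S N u + kap ^ N * (L ^^ N) h u)"
      by (simp add: S_def fun_eq_iff)
    ultimately show ?case by auto
  qed
  have LS: "L (S N) t = (\<Sum>n<N. kap ^ n * (L ^^ Suc n) h t)" for N
  proof (induction N)
    case 0 then show ?case using L_zero by (simp add: S_def)
  next
    case (Suc N)
    obtain c' where c': "B (S N) c'" using SB by blast
    have "S (Suc N) = (\<lambda>u. S N u + kap ^ N * (L ^^ N) h u)"
      by (simp add: S_def fun_eq_iff)
    then have "L (S (Suc N)) t = L (S N) t + L (\<lambda>u. kap ^ N * (L ^^ N) h u) t"
      using L_add[OF c' B_smult[OF P_B[OF hB]] t] by simp
    also have "\<dots> = L (S N) t + kap ^ N * (L ^^ Suc N) h t"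
      using Lop_smult by simp
    finally show ?case using Suc by simp
  qed
  have summ: "summable (\<lambda>n. kap ^ n * (L ^^ n) h u)" if "0 \<le> u" for u
    by (rule M_summable[OF hB that])
  have RB: "B (\<lambda>u. M h u + (-1) * S N u) (q ^ N * c / (1 - q))" for N
    unfolding B_def
  proof
    obtain c' where c': "B (S N) c'" using SB by blast
    show "(\<lambda>u. M h u + (-1) * S N u) \<in> borel_measurable halfline"
      using B_add[OF M_B[OF hB] B_smult[OF c', of "-1"]] by (simp add: B_def)
    show "AE u in halfline. \<bar>M h u + (-1) * S N u\<bar> * exp (lam * u) \<le> q ^ N * c / (1 - q)"
      using P_ae[OF hB]
    proof eventually_elim
      case (elim u)
      have "M h u + (-1) * S N u = (\<Sum>n. kap ^ (n + N) * (L ^^ (n + N)) h u)"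
        unfolding M_def S_def using suminf_minus_initial_segment[OF summ[of u], of N] elim by simp
      also have "\<bar>\<dots>\<bar> \<le> q ^ N * c * exp (- lam * u) / (1 - q)"
      proof (rule geo_bound(2)[OF q0 q1'])
        fix n
        have "\<bar>kap ^ (n + N) * (L ^^ (n + N)) h u\<bar> \<le> q ^ (n + N) * (c * exp (- lam * u))"
          by (rule term_bound) (use elim in auto)
        then show "\<bar>kap ^ (n + N) * (L ^^ (n + N)) h u\<bar> \<le> q ^ n * (q ^ N * c * exp (- lam * u))"
          by (simp add: power_add mult_ac)
      qed
      finally have "\<bar>M h u + (-1) * S N u\<bar> * exp (lam * u) \<le> q ^ N * c * exp (- lam * u) / (1 - q) * exp (lam * u)"
        by (intro mult_right_mono) auto
      also have "\<dots> = q ^ N * c / (1 - q)" by (simp add: field_simps mult_exp_exp)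
      finally show ?case .
    qed
  qed
  have split: "L (M h) t = L (S N) t + L (\<lambda>u. M h u + (-1) * S N u) t" for N
  proof -
    obtain c' where c': "B (S N) c'" using SB by blast
    have "M h = (\<lambda>u. S N u + (M h u + (-1) * S N u))" by (simp add: fun_eq_iff)
    then have "L (M h) t = L (\<lambda>u. S N u + (M h u + (-1) * S N u)) t" by simp
    also have "\<dots> = L (S N) t + L (\<lambda>u. M h u + (-1) * S N u) t"
      by (rule L_add[OF c' RB t])
    finally show ?thesis .
  qed
  have "(\<lambda>N. L (\<lambda>u. M h u + (-1) * S N u) t) \<longlonglongrightarrow> 0"
  proof (rule Lim_null_comparison)
    show "\<forall>\<^sub>F N in sequentially. norm (L (\<lambda>u. M h u + (-1) * S N u) t) \<le> K * (q ^ N * c / (1 - q)) * exp (- lam * t)"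
    proof (rule always_eventually, rule allI)
      fix N
      have "\<bar>L (\<lambda>u. M h u + (-1) * S N u) t\<bar> * exp (lam * t) \<le> K * (q ^ N * c / (1 - q))"
        by (rule L_bound_pt[OF RB t])
      then have "\<bar>L (\<lambda>u. M h u + (-1) * S N u) t\<bar> * exp (lam * t) * exp (- lam * t) \<le> K * (q ^ N * c / (1 - q)) * exp (- lam * t)"
        by (intro mult_right_mono) auto
      then show "norm (L (\<lambda>u. M h u + (-1) * S N u) t) \<le> K * (q ^ N * c / (1 - q)) * exp (- lam * t)"
        by (simp add: mult.assoc mult_exp_exp)
    qed
    have "(\<lambda>N. K * (q ^ N * c / (1 - q)) * exp (- lam * t)) \<longlonglongrightarrow> K * (0 * c / (1 - q)) * exp (- lam * t)"
      by (intro tendsto_intros LIMSEQ_power_zero) (use q0 q1' in auto)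
    then show "(\<lambda>N. K * (q ^ N * c / (1 - q)) * exp (- lam * t)) \<longlonglongrightarrow> 0" by simp
  qed
  then have "(\<lambda>N. L (M h) t - L (\<lambda>u. M h u + (-1) * S N u) t) \<longlonglongrightarrow> L (M h) t - 0"
    by (intro tendsto_diff tendsto_const)
  moreover have "(\<lambda>N. L (M h) t - L (\<lambda>u. M h u + (-1) * S N u) t) = (\<lambda>N. \<Sum>n<N. kap ^ n * (L ^^ Suc n) h t)"
  proof
    fix N
    have "L (M h) t - L (\<lambda>u. M h u + (-1) * S N u) t = L (S N) t"
      using split[of N] by linarith
    then show "L (M h) t - L (\<lambda>u. M h u + (-1) * S N u) t = (\<Sum>n<N. kap ^ n * (L ^^ Suc n) h t)"
      using LS[of N] by simp
  qed
  ultimately have lim1: "(\<lambda>N. \<Sum>n<N. kap ^ n * (L ^^ Suc n) h t) \<longlonglongrightarrow> L (M h) t"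
    by simp
  have s2: "summable (\<lambda>n. kap ^ n * (L ^^ Suc n) h t)"
    by (rule geo_bound(1)[OF q0 q1' term_bound2[OF hB t]])
  have LM: "L (M h) t = (\<Sum>n. kap ^ n * (L ^^ Suc n) h t)"
    using LIMSEQ_unique[OF lim1 summable_LIMSEQ[OF s2]] .
  have "T (M h) t = suminf a - kap * (\<Sum>n. kap ^ n * (L ^^ Suc n) h t)"
    unfolding T_def LM by (simp add: M_def a_def[abs_def])
  also have "kap * (\<Sum>n. kap ^ n * (L ^^ Suc n) h t) = (\<Sum>n. a (Suc n))"
    unfolding a_def using suminf_mult[OF s2, of kap] by (simp add: mult_ac)
  also have "suminf a - (\<Sum>n. a (Suc n)) = a 0"
  proof -
    have "summable a" using summ[OF t] by (simp add: a_def[abs_def])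
    from suminf_split_head[OF this] show ?thesis by simp
  qed
  finally show ?thesis by (simp add: a_def)
qed

lemma T_B: assumes "B k c" shows "B (T k) (c + kap * K * c)"
proof -
  have "B (\<lambda>u. k u + (- kap) * L k u) (c + \<bar>- kap\<bar> * (K * c))"
    by (intro B_add B_smult L_B assms)
  moreover have "(\<lambda>u. k u + (- kap) * L k u) = T k" by (simp add: T_def fun_eq_iff)
  ultimately show ?thesis using kap0 by (simp add: mult.assoc)
qed

lemma MT:
  assumes kB: "B k c" and t: "0 \<le> t"
  shows "M (T k) t = k t"
proof -
  have P: "0 \<le> u \<Longrightarrow> (L ^^ n) (T k) u = (L ^^ n) k u - kap * (L ^^ Suc n) k u" for n u
  proof (induction n arbitrary: u)
    case 0 then show ?case by (simp add: T_def)
  next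
    case (Suc n)
    have "(L ^^ Suc n) (T k) u = L ((L ^^ n) (T k)) u" by simp
    also have "\<dots> = L (\<lambda>v. (L ^^ n) k v + (- kap) * (L ^^ Suc n) k v) u"
      by (rule Lop_local) (use Suc in auto)
    also have "\<dots> = L ((L ^^ n) k) u + L (\<lambda>v. (- kap) * (L ^^ Suc n) k v) u"
      by (rule L_add[OF P_B[OF kB] B_smult[OF P_B[OF kB]] Suc.prems])
    also have "\<dots> = (L ^^ Suc n) k u - kap * (L ^^ Suc (Suc n)) k u"
      using Lop_smult[of g sig gam "- kap" "(L ^^ Suc n) k" u] by simp
    finally show ?case .
  qed
  define a where "a n = kap ^ n * (L ^^ n) k t" for n
  have sa: "summable a" unfolding a_def by (rule M_summable[OF kB t])
  have "(\<lambda>n. kap ^ n * (L ^^ n) (T k) t) = (\<lambda>n. a n - a (Suc n))"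
  proof
    fix n show "kap ^ n * (L ^^ n) (T k) t = a n - a (Suc n)"
      unfolding a_def P[OF t] by (simp add: algebra_simps)
  qed
  then have "M (T k) t = (\<Sum>n. a n - a (Suc n))"
    unfolding M_def by simp
  also have "\<dots> = suminf a - (\<Sum>n. a (Suc n))"
    by (rule suminf_diff[symmetric]) (use sa in \<open>auto simp: summable_Suc_iff\<close>)
  also have "\<dots> = a 0" using suminf_split_head[OF sa] by simp
  finally show ?thesis by (simp add: a_def)
qed

lemma invertible: "bounded_invertible_on lam (\<lambda>k t. k t - kap * Lop g sig gam k t)"
proof -
  have TT: "(\<lambda>k t. k t - kap * Lop g sig gam k t) = T" by (simp add: T_def[abs_def])
  have sp: "\<And>P. (\<And>t. 0 \<le> t \<Longrightarrow> P t) \<Longrightarrow> AE t in halfline. P t"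
    by (rule AE_I2) (simp add: space_halfline)
  show ?thesis
    unfolding TT bounded_invertible_on_def
  proof (intro conjI exI ballI impI)
    fix k assume k: "k \<in> Linf lam"
    obtain c where c: "B k c" "wnorm lam k = ereal c" using Linf_B[OF k] by blast
    have TB: "B (T k) ((1 + kap * K) * c)" using T_B[OF c(1)] by (simp add: algebra_simps)
    show "T k \<in> Linf lam" by (rule B_Linf[OF TB])
    show "wnorm lam (T k) \<le> ereal (1 + kap * K) * wnorm lam k"
      using B_wnorm[OF TB] c(2) by simp
  next
    fix h assume h: "h \<in> Linf lam"
    obtain c where c: "B h c" "wnorm lam h = ereal c" using Linf_B[OF h] by blast
    have MB: "B (M h) (1 / (1 - q) * c)" using M_B[OF c(1)] by simp
    show "M h \<in> Linf lam" by (rule B_Linf[OF MB])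
    show "wnorm lam (M h) \<le> ereal (1 / (1 - q)) * wnorm lam h"
      using B_wnorm[OF MB] c(2) by simp
  next
    fix h1 h2 assume h: "h1 \<in> Linf lam" "h2 \<in> Linf lam" and e: "ae_eq h1 h2"
    obtain c1 where c1: "B h1 c1" using Linf_B[OF h(1)] by blast
    obtain c2 where c2: "B h2 c2" using Linf_B[OF h(2)] by blast
    show "ae_eq (M h1) (M h2)" using M_ae_cong[OF c1 c2] e by (simp add: ae_eq_def)
  next
    fix h assume h: "h \<in> Linf lam"
    obtain c where c: "B h c" using Linf_B[OF h] by blast
    show "ae_eq (T (M h)) h" unfolding ae_eq_def by (rule sp) (rule TM[OF c])
  next
    fix k assume k: "k \<in> Linf lam"
    obtain c where c: "B k c" using Linf_B[OF k] by blast
    show "ae_eq (M (T k)) k" unfolding ae_eq_def by (rule sp) (rule MT[OF c])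
  qed
qed

end

theorem lemma4p2:
  fixes g :: "real measure" and \<beta> \<sigma> \<gamma> :: real
  assumes "prob_space g" and "sets g = sets borel"
    and "\<And>A. A \<in> sets borel \<Longrightarrow> emeasure g (uminus ` A) = emeasure g A"
    and "\<beta> > 0" and "\<sigma> > 0" and "\<gamma> = \<beta> + \<sigma>\<^sup>2 / 2"
  shows "(\<forall>lam. 0 < lam \<and> lam < \<sigma>\<^sup>2 / 2 \<longrightarrow>
            Lnorm g \<sigma> \<gamma> lam \<le> ereal (1 / ((\<gamma> + lam) * (\<sigma>\<^sup>2 - 2 * lam))))
       \<and> (\<forall>\<kappa>::real. 0 \<le> \<kappa> \<and> \<kappa> < \<gamma> * \<sigma>\<^sup>2 \<longrightarrow>
            (\<exists>lam>0. bounded_invertible_on lam (\<lambda>k t. k t - \<kappa> * Lop g \<sigma> \<gamma> k t)))"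
proof (intro conjI allI impI)
  have gam: "0 < \<gamma>" using assms(4,6) by (simp add: add_pos_nonneg)
  fix lam :: real assume l: "0 < lam \<and> lam < \<sigma>\<^sup>2 / 2"
  interpret setting g \<sigma> \<gamma> lam
    by (rule setting.intro[OF assms(1,2,5) gam conjunct1[OF l] conjunct2[OF l]])
  show "Lnorm g \<sigma> \<gamma> lam \<le> ereal (1 / ((\<gamma> + lam) * (\<sigma>\<^sup>2 - 2 * lam)))"
    using Lnorm_bound by (simp add: K_def)
next
  have gam: "0 < \<gamma>" using assms(4,6) by (simp add: add_pos_nonneg)
  fix \<kappa> :: real assume k: "0 \<le> \<kappa> \<and> \<kappa> < \<gamma> * \<sigma>\<^sup>2"
  define d where "d = \<gamma> * \<sigma>\<^sup>2 - \<kappa>"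
  have d: "0 < d" using k by (simp add: d_def)
  have s2: "0 < \<sigma>\<^sup>2" using assms(5) by simp
  define lam where "lam = min (\<sigma>\<^sup>2 / 4) (d / (4 * \<gamma> + \<sigma>\<^sup>2))"
  have den: "0 < 4 * \<gamma> + \<sigma>\<^sup>2" using s2 gam by (intro add_pos_pos) auto
  have l0: "0 < lam" using d s2 den by (simp add: lam_def)
  have l1: "lam \<le> \<sigma>\<^sup>2 / 4" unfolding lam_def by (rule min.cobounded1)
  have l2: "lam \<le> d / (4 * \<gamma> + \<sigma>\<^sup>2)" unfolding lam_def by (rule min.cobounded2)
  have l3: "lam < \<sigma>\<^sup>2 / 2" using l1 s2 by linarith
  have a1: "2 * lam * lam \<le> lam * \<sigma>\<^sup>2"
  proof -
    have "2 * lam \<le> \<sigma>\<^sup>2" using l1 s2 by linarith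
    then show ?thesis using l0 by (simp add: mult.commute mult_right_mono)
  qed
  have a2: "2 * \<gamma> * lam < d"
  proof -
    have "lam * (4 * \<gamma> + \<sigma>\<^sup>2) \<le> d" using l2 gam s2 by (simp add: field_simps)
    moreover have "2 * \<gamma> * lam < lam * (4 * \<gamma> + \<sigma>\<^sup>2)"
    proof -
      have "0 < 2 * \<gamma> + \<sigma>\<^sup>2" using gam s2 by linarith
      then have p: "0 < lam * (2 * \<gamma> + \<sigma>\<^sup>2)" by (rule mult_pos_pos[OF l0])
      have "lam * (4 * \<gamma> + \<sigma>\<^sup>2) = 2 * \<gamma> * lam + lam * (2 * \<gamma> + \<sigma>\<^sup>2)"
        by (simp add: algebra_simps)
      then show ?thesis using p by linarith
    qed
    ultimately show ?thesis by linarith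
  qed
  have prod: "(\<gamma> + lam) * (\<sigma>\<^sup>2 - 2 * lam) = \<gamma> * \<sigma>\<^sup>2 - 2 * \<gamma> * lam + lam * \<sigma>\<^sup>2 - 2 * lam * lam"
    by (simp add: algebra_simps)
  have kl: "\<kappa> < (\<gamma> + lam) * (\<sigma>\<^sup>2 - 2 * lam)"
    unfolding prod using a1 a2 d_def by linarith
  have pos: "0 < (\<gamma> + lam) * (\<sigma>\<^sup>2 - 2 * lam)" using gam l0 l3 by simp
  have S: "setting g \<sigma> \<gamma> lam"
    by (rule setting.intro[OF assms(1,2,5) gam l0 l3])
  interpret setting g \<sigma> \<gamma> lam by (rule S)
  have q: "\<kappa> * K < 1" unfolding K_def using kl pos by (simp add: field_simps)
  have k0: "0 \<le> \<kappa>" using k by simp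
  interpret neumann g \<sigma> \<gamma> lam \<kappa>
    by (rule neumann.intro[OF S neumann_axioms.intro[OF k0 q]])
  show "\<exists>lam>0. bounded_invertible_on lam (\<lambda>k t. k t - \<kappa> * Lop g \<sigma> \<gamma> k t)"
    using invertible l0 by blast
qed

end
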